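(* Let $X\subset[0,1]$ with $\overline{\dim}_B(X)=a$. Then $\max\{1,2a\}\le\overline{\dim}_{GB}(X)\le a+1$.
   Context: For $\delta>0$ and $F\subset\mathbb{R}^d$, $N_\delta(F)$ is the number of cubes of the standard $\delta$-grid in $\mathbb{R}^d$ that intersect $F$, and $\overline{\dim}_B(F)=\limsup_{\delta\to0}\frac{\log N_\delta(F)}{-\log\delta}$. $C_u(X)$ is the set of uniformly continuous real functions on $X$, $\mathrm{graph}(f)=\{(x,f(x)):x\in X\}$, and $\overline{\dim}_{GB}(X)=\sup_{f\in C_u(X)}\overline{\dim}_B(\mathrm{graph}(f))$. *)

theory Defs
  imports "HOL-Analysis.Analysis"
begin

text \<open>The cube of the standard \<delta>-grid with integer index vector k (only the values of
  k on the Basis matter): the product of the half-open intervals [k_b \<delta>, (k_b+1) \<delta>).\<close>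
definition grid_cube :: "real \<Rightarrow> ('a::euclidean_space \<Rightarrow> int) \<Rightarrow> 'a set" where
  "grid_cube \<delta> k = {x. \<forall>b\<in>Basis. of_int (k b) * \<delta> \<le> x \<bullet> b \<and> x \<bullet> b < (of_int (k b) + 1) * \<delta>}"

definition grid_count :: "real \<Rightarrow> 'a::euclidean_space set \<Rightarrow> nat" where
  "grid_count \<delta> F = card {C. \<exists>k. C = grid_cube \<delta> k \<and> C \<inter> F \<noteq> {}}"

definition upper_box_dim :: "'a::euclidean_space set \<Rightarrow> ereal" where
  "upper_box_dim F = Limsup (at_right 0) (\<lambda>\<delta>. ereal (ln (real (grid_count \<delta> F)) / (- ln \<delta>)))"

definition graph_on :: "'a set \<Rightarrow> ('a \<Rightarrow> 'b) \<Rightarrow> ('a \<times> 'b) set" where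
  "graph_on X f = {(x, f x) | x. x \<in> X}"

definition upper_graph_box_dim :: "real set \<Rightarrow> ereal" where
  "upper_graph_box_dim X =
     (SUP f \<in> {f :: real \<Rightarrow> real. uniformly_continuous_on X f}. upper_box_dim (graph_on X f))"

end

theory Submission
  imports Defs
begin

definition cube1 :: "real \<Rightarrow> int \<Rightarrow> real set" where
  "cube1 \<delta> j = {x. of_int j * \<delta> \<le> x \<and> x < (of_int j + 1) * \<delta>}"

lemma mem_cube1: "\<delta> > 0 \<Longrightarrow> x \<in> cube1 \<delta> j \<longleftrightarrow> \<lfloor>x / \<delta>\<rfloor> = j"
  by (simp add: cube1_def floor_eq_iff pos_le_divide_eq pos_divide_less_eq)

lemma cube1_inj: "\<delta> > 0 \<Longrightarrow> inj (cube1 \<delta>)"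
proof (rule injI)
  fix i j assume d: "\<delta> > 0" and e: "cube1 \<delta> i = cube1 \<delta> j"
  have "of_int i * \<delta> \<in> cube1 \<delta> i" using d by (simp add: cube1_def algebra_simps)
  hence "of_int i * \<delta> \<in> cube1 \<delta> j" using e by simp
  thus "i = j" using d by (simp add: mem_cube1)
qed

lemma grid_cube_real: "grid_cube \<delta> k = cube1 \<delta> (k 1)"
  by (simp add: grid_cube_def cube1_def)

lemma grid_count_real:
  assumes d: "\<delta> > 0"
  shows "grid_count \<delta> (F::real set) = card ((\<lambda>x. \<lfloor>x / \<delta>\<rfloor>) ` F)"
proof -
  have "{C. \<exists>k. C = grid_cube \<delta> k \<and> C \<inter> F \<noteq> {}} = cube1 \<delta> ` ((\<lambda>x. \<lfloor>x / \<delta>\<rfloor>) ` F)"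
  proof (intro equalityI subsetI)
    fix C assume "C \<in> {C. \<exists>k. C = grid_cube \<delta> k \<and> C \<inter> F \<noteq> {}}"
    then obtain k x where C: "C = grid_cube \<delta> k" "x \<in> C" "x \<in> F" by blast
    hence "C = cube1 \<delta> (\<lfloor>x / \<delta>\<rfloor>)"
      using d by (simp add: grid_cube_real mem_cube1)
    thus "C \<in> cube1 \<delta> ` (\<lambda>x. \<lfloor>x / \<delta>\<rfloor>) ` F"
      using C by blast
  next
    fix C assume "C \<in> cube1 \<delta> ` (\<lambda>x. \<lfloor>x / \<delta>\<rfloor>) ` F"
    then obtain x where x: "x \<in> F" "C = cube1 \<delta> \<lfloor>x / \<delta>\<rfloor>" by blast
    have "C = grid_cube \<delta> (\<lambda>_. \<lfloor>x / \<delta>\<rfloor>)" using x by (simp add: grid_cube_real)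
    moreover have "x \<in> C" using x d by (simp add: mem_cube1)
    ultimately show "C \<in> {C. \<exists>k. C = grid_cube \<delta> k \<and> C \<inter> F \<noteq> {}}" using x by blast
  qed
  thus ?thesis unfolding grid_count_def
    using card_image[OF inj_on_subset[OF cube1_inj[OF d] subset_UNIV]] by simp
qed

lemma grid_cube_prod: "grid_cube \<delta> (k :: real\<times>real \<Rightarrow> int) = cube1 \<delta> (k (1,0)) \<times> cube1 \<delta> (k (0,1))"
  by (auto simp: grid_cube_def cube1_def Basis_prod_def)

lemma grid_count_prod:
  assumes d: "\<delta> > 0"
  shows "grid_count \<delta> (G::(real\<times>real) set) = card ((\<lambda>(x,y). (\<lfloor>x / \<delta>\<rfloor>, \<lfloor>y / \<delta>\<rfloor>)) ` G)"
proof -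
  let ?c = "\<lambda>(i,j). cube1 \<delta> i \<times> cube1 \<delta> j"
  have inj: "inj ?c"
  proof (rule injI, clarsimp)
    fix a b c e assume "cube1 \<delta> a \<times> cube1 \<delta> b = cube1 \<delta> c \<times> cube1 \<delta> e"
    moreover have "cube1 \<delta> a \<noteq> {}" "cube1 \<delta> b \<noteq> {}"
      using d by (auto simp: cube1_def intro!: exI[of _ "of_int _ * \<delta>"])
    ultimately have "cube1 \<delta> a = cube1 \<delta> c" "cube1 \<delta> b = cube1 \<delta> e"
      by (metis Sigma_empty2 fst_image_times, metis Sigma_empty1 snd_image_times)
    thus "a = c \<and> b = e" using cube1_inj[OF d] by (auto dest: injD)
  qed
  have "{C. \<exists>k. C = grid_cube \<delta> k \<and> C \<inter> G \<noteq> {}} = ?c ` ((\<lambda>(x,y). (\<lfloor>x / \<delta>\<rfloor>, \<lfloor>y / \<delta>\<rfloor>)) ` G)"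
  proof (intro equalityI subsetI)
    fix C assume "C \<in> {C. \<exists>k. C = grid_cube \<delta> k \<and> C \<inter> G \<noteq> {}}"
    then obtain k x y where C: "C = grid_cube \<delta> k" "(x,y) \<in> C" "(x,y) \<in> G" by auto
    hence "C = ?c ((\<lambda>(x,y). (\<lfloor>x / \<delta>\<rfloor>, \<lfloor>y / \<delta>\<rfloor>)) (x,y))"
      using d by (simp add: grid_cube_prod mem_cube1)
    thus "C \<in> ?c ` (\<lambda>(x,y). (\<lfloor>x / \<delta>\<rfloor>, \<lfloor>y / \<delta>\<rfloor>)) ` G"
      using C by blast
  next
    fix C assume "C \<in> ?c ` (\<lambda>(x,y). (\<lfloor>x / \<delta>\<rfloor>, \<lfloor>y / \<delta>\<rfloor>)) ` G"
    then obtain x y where x: "(x,y) \<in> G" "C = cube1 \<delta> \<lfloor>x / \<delta>\<rfloor> \<times> cube1 \<delta> \<lfloor>y / \<delta>\<rfloor>" by auto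
    have "C = grid_cube \<delta> (\<lambda>v. if v = (1,0) then \<lfloor>x / \<delta>\<rfloor> else \<lfloor>y / \<delta>\<rfloor>)"
      using x by (simp add: grid_cube_prod)
    moreover have "(x,y) \<in> C" using x d by (simp add: mem_cube1)
    ultimately show "C \<in> {C. \<exists>k. C = grid_cube \<delta> k \<and> C \<inter> G \<noteq> {}}" using x by blast
  qed
  thus ?thesis unfolding grid_count_def
    using card_image[OF inj_on_subset[OF inj subset_UNIV]] by simp
qed

lemma finite_floor_image:
  assumes "F \<subseteq> {a..b}" "\<delta> > 0"
  shows "finite ((\<lambda>x. \<lfloor>x / \<delta>\<rfloor>) ` F)"
proof (rule finite_subset[OF _ finite_atLeastAtMost_int[of "\<lfloor>a/\<delta>\<rfloor>" "\<lfloor>b/\<delta>\<rfloor>"]])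
  show "(\<lambda>x. \<lfloor>x / \<delta>\<rfloor>) ` F \<subseteq> {\<lfloor>a / \<delta>\<rfloor>..\<lfloor>b / \<delta>\<rfloor>}"
  proof (rule image_subsetI)
    fix x assume "x \<in> F"
    hence "a \<le> x" "x \<le> b" using assms by auto
    thus "\<lfloor>x / \<delta>\<rfloor> \<in> {\<lfloor>a / \<delta>\<rfloor>..\<lfloor>b / \<delta>\<rfloor>}"
      using assms by (auto intro!: floor_mono divide_right_mono)
  qed
qed

lemma card_floor_interval:
  assumes "\<delta> > 0" "M \<ge> 0"
  shows "real (card {\<lfloor>-M/\<delta>\<rfloor>..\<lfloor>M/\<delta>\<rfloor>}) \<le> 2*M/\<delta> + 2"
proof -
  have "real (card {\<lfloor>-M/\<delta>\<rfloor>..\<lfloor>M/\<delta>\<rfloor>}) = real (nat (\<lfloor>M/\<delta>\<rfloor> + 1 - \<lfloor>-M/\<delta>\<rfloor>))" by simp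
  also have "\<dots> \<le> 2*M/\<delta> + 2"
  proof -
    have "\<lfloor>M/\<delta>\<rfloor> \<le> M/\<delta>" "-M/\<delta> - 1 < \<lfloor>-M/\<delta>\<rfloor>" by linarith+
    moreover have "M/\<delta> \<ge> 0" using assms by simp
    ultimately show ?thesis by (simp add: of_nat_nat) linarith
  qed
  finally show ?thesis .
qed

lemma graph_count_le:
  fixes X :: "real set" and f :: "real \<Rightarrow> real"
  assumes d: "\<delta> > 0" and M: "M \<ge> 0" and fM: "\<forall>x\<in>X. \<bar>f x\<bar> \<le> M" and X: "X \<subseteq> {0..1}"
  shows "real (grid_count \<delta> (graph_on X f)) \<le> real (grid_count \<delta> X) * (2*M/\<delta> + 2)"
proof -
  let ?I = "{\<lfloor>-M/\<delta>\<rfloor>..\<lfloor>M/\<delta>\<rfloor>}"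
  have sub: "(\<lambda>(x,y). (\<lfloor>x / \<delta>\<rfloor>, \<lfloor>y / \<delta>\<rfloor>)) ` graph_on X f \<subseteq> ((\<lambda>x. \<lfloor>x / \<delta>\<rfloor>) ` X) \<times> ?I"
  proof
    fix z assume "z \<in> (\<lambda>(x,y). (\<lfloor>x / \<delta>\<rfloor>, \<lfloor>y / \<delta>\<rfloor>)) ` graph_on X f"
    then obtain x where x: "x \<in> X" "z = (\<lfloor>x / \<delta>\<rfloor>, \<lfloor>f x / \<delta>\<rfloor>)" by (auto simp: graph_on_def)
    have "-M \<le> f x" "f x \<le> M" using fM x by auto
    hence "\<lfloor>-M/\<delta>\<rfloor> \<le> \<lfloor>f x / \<delta>\<rfloor>" "\<lfloor>f x / \<delta>\<rfloor> \<le> \<lfloor>M/\<delta>\<rfloor>"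
      using d by (auto intro!: floor_mono simp: field_simps)
    thus "z \<in> ((\<lambda>x. \<lfloor>x / \<delta>\<rfloor>) ` X) \<times> ?I" using x by auto
  qed
  have fin: "finite (((\<lambda>x. \<lfloor>x / \<delta>\<rfloor>) ` X) \<times> ?I)"
    using finite_floor_image[OF X d] by simp
  have "grid_count \<delta> (graph_on X f) \<le> card (((\<lambda>x. \<lfloor>x / \<delta>\<rfloor>) ` X) \<times> ?I)"
    unfolding grid_count_prod[OF d] by (rule card_mono[OF fin sub])
  also have "\<dots> = grid_count \<delta> X * card ?I"
    by (simp add: card_cartesian_product grid_count_real[OF d])
  finally have "real (grid_count \<delta> (graph_on X f)) \<le> real (grid_count \<delta> X) * real (card ?I)"
    by (metis of_nat_le_iff of_nat_mult)
  also have "\<dots> \<le> real (grid_count \<delta> X) * (2*M/\<delta> + 2)"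
    by (rule mult_left_mono[OF card_floor_interval[OF d M]]) simp
  finally show ?thesis .
qed

lemma grid_count_pos:
  fixes X :: "real set"
  assumes "\<delta> > 0" "X \<noteq> {}" "X \<subseteq> {0..1}"
  shows "grid_count \<delta> X \<ge> 1"
  using assms finite_floor_image[OF assms(3,1)] unfolding grid_count_real[OF assms(1)]
  by (simp add: Suc_le_eq card_gt_0_iff)

lemma upper_bound:
  fixes X :: "real set" and f :: "real \<Rightarrow> real"
  assumes X: "X \<subseteq> {0..1}" "X \<noteq> {}" and uc: "uniformly_continuous_on X f"
  shows "upper_box_dim (graph_on X f) \<le> upper_box_dim X + 1"
proof -
  have "bounded (f ` X)"
    by (rule bounded_uniformly_continuous_image[OF uc]) (use X in \<open>meson compact_Icc compact_imp_bounded bounded_subset\<close>)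
  then obtain M0 where M0: "\<forall>x\<in>X. \<bar>f x\<bar> \<le> M0" by (auto simp: bounded_real)
  define M where "M = max M0 0"
  have M: "M \<ge> 0" "\<forall>x\<in>X. \<bar>f x\<bar> \<le> M" using M0 by (auto simp: M_def)
  define C where "C = ln (2*M+2)"
  have C: "C \<ge> 0" using M by (simp add: C_def)
  let ?r1 = "\<lambda>\<delta>. ln (real (grid_count \<delta> X)) / (- ln \<delta>)"
  let ?r2 = "\<lambda>\<delta>. ln (real (grid_count \<delta> (graph_on X f))) / (- ln \<delta>)"
  have key: "?r2 \<delta> \<le> ?r1 \<delta> + 1 + C / (- ln \<delta>)" if d: "0 < \<delta>" "\<delta> < 1" for \<delta>
  proof -
    have L: "- ln \<delta> > 0" using d by simp
    have N1: "real (grid_count \<delta> X) \<ge> 1" using grid_count_pos[OF d(1) X(2,1)] by simp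
    have "2*M/\<delta> + 2 \<le> (2*M+2)/\<delta>" using d M
      by (simp add: field_simps)
    hence N2: "real (grid_count \<delta> (graph_on X f)) \<le> real (grid_count \<delta> X) * ((2*M+2)/\<delta>)"
      using graph_count_le[OF d(1) M(1) M(2) X(1)] N1
      by (meson mult_left_mono of_nat_0_le_iff order_trans)
    have "ln (real (grid_count \<delta> (graph_on X f))) \<le> ln (real (grid_count \<delta> X) * ((2*M+2)/\<delta>))"
    proof (cases "grid_count \<delta> (graph_on X f) = 0")
      case True
      have h: "1 \<le> (2*M+2)/\<delta>" using M d by (simp add: field_simps)
      have "1 \<le> real (grid_count \<delta> X) * ((2*M+2)/\<delta>)"
        using mult_mono[OF N1 h] by simp
      then show ?thesis using True by simp
    next
      case False
      then show ?thesis using N2 by (intro ln_le_cancel_iff[THEN iffD2]) auto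
    qed
    also have "\<dots> = ln (real (grid_count \<delta> X)) + C + (- ln \<delta>)"
      using N1 M d by (simp add: C_def ln_mult ln_div)
    finally have lnle: "ln (real (grid_count \<delta> (graph_on X f))) \<le> ln (real (grid_count \<delta> X)) + C + (- ln \<delta>)" .
    have "?r2 \<delta> \<le> (ln (real (grid_count \<delta> X)) + C + (- ln \<delta>)) / (- ln \<delta>)"
      using divide_right_mono[OF lnle, of "- ln \<delta>"] L by linarith
    also have "\<dots> = ?r1 \<delta> + 1 + C / (- ln \<delta>)" using L by (simp add: field_simps)
    finally show ?thesis .
  qed
  show ?thesis
  proof (rule ereal_le_epsilon2)
    fix e :: real assume e: "0 < e"
    have ev: "eventually (\<lambda>\<delta>. ereal (?r2 \<delta>) \<le> ereal (?r1 \<delta>) + ereal (1 + e)) (at_right 0)"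
    proof -
      define t where "t = min (1/2) (exp (- C / e))"
      have t: "0 < t" by (simp add: t_def)
      show ?thesis
      proof (rule eventually_mono[OF eventually_at_right_real[OF t]])
        fix \<delta> assume "\<delta> \<in> {0<..<t}"
        hence d: "0 < \<delta>" "\<delta> < 1/2" "\<delta> < exp (- C / e)" by (auto simp: t_def)
        have L: "- ln \<delta> > 0" using d by simp
        have "ln \<delta> < - C / e" using d by (metis ln_exp ln_less_cancel_iff exp_gt_zero)
        hence "C / e < - ln \<delta>" by linarith
        hence "C < e * (- ln \<delta>)" using e by (simp add: field_simps)
        hence "C / (- ln \<delta>) \<le> e" using L by (simp add: field_simps)
        thus "ereal (?r2 \<delta>) \<le> ereal (?r1 \<delta>) + ereal (1 + e)"
          using key[of \<delta>] d by simp
      qed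
    qed
    have "upper_box_dim (graph_on X f) \<le> Limsup (at_right 0) (\<lambda>\<delta>. ereal (?r1 \<delta>) + ereal (1 + e))"
      unfolding upper_box_dim_def by (rule Limsup_mono[OF ev])
    also have "\<dots> = upper_box_dim X + ereal (1 + e)"
      unfolding upper_box_dim_def by (rule Limsup_add_ereal_right) auto
    finally show "upper_box_dim (graph_on X f) \<le> upper_box_dim X + 1 + ereal e"
      using add.assoc[of "upper_box_dim X" 1 "ereal e"] by (simp add: one_ereal_def)
  qed
qed

lemma seq_extension:
  fixes P :: "nat \<Rightarrow> real set" and Y :: "nat \<Rightarrow> real \<Rightarrow> real" and rad :: "nat \<Rightarrow> real"
  assumes fin: "\<And>n. finite (P n)"
    and Psub: "\<And>n. P n \<subseteq> ball p (rad n) - {p}"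
    and radle: "\<And>n. rad n \<le> 1 / (real n + 1)"
    and anti: "\<And>m n. m \<le> n \<Longrightarrow> rad n \<le> rad m"
    and radpos: "\<And>n. rad n > 0"
    and sep: "\<And>n x. x \<in> P n \<Longrightarrow> rad (Suc n) \<le> \<bar>x - p\<bar>"
    and Yb: "\<And>n x. x \<in> P n \<Longrightarrow> \<bar>Y n x\<bar> \<le> 1 / (real n + 1)"
  shows "\<exists>g. continuous_on UNIV g \<and> (\<forall>n. \<forall>x\<in>P n. g x = Y n x)"
proof -
  have inball: "\<bar>x - p\<bar> < rad n" if "x \<in> P n" for x n
    using Psub[of n] that by (auto simp: dist_real_def abs_minus_commute)
  have disj: "n = m" if "x \<in> P n" "x \<in> P m" for x n m
  proof (rule ccontr)
    assume "n \<noteq> m"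
    then consider "n < m" | "m < n" by linarith
    thus False
    proof cases
      case 1
      have "\<bar>x - p\<bar> < rad m" using inball[OF that(2)] .
      also have "rad m \<le> rad (Suc n)" using 1 by (intro anti) simp
      finally show False using sep[OF that(1)] by simp
    next
      case 2
      have "\<bar>x - p\<bar> < rad n" using inball[OF that(1)] .
      also have "rad n \<le> rad (Suc m)" using 2 by (intro anti) simp
      finally show False using sep[OF that(2)] by simp
    qed
  qed
  define F where "F x = (if \<exists>n. x \<in> P n then Y (SOME n. x \<in> P n) x else 0)" for x
  have FY: "F x = Y n x" if "x \<in> P n" for x n
  proof -
    have "(SOME n. x \<in> P n) = n" using that disj by (metis someI)
    thus ?thesis using that by (auto simp: F_def)
  qed
  have pnot: "p \<notin> P n" for n using Psub[of n] by auto
  have Fp: "F p = 0" using pnot by (simp add: F_def)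
  define S where "S = insert p (\<Union>n. P n)"
  have finout: "finite (S \<inter> {x. t \<le> \<bar>x - p\<bar>})" if t: "t > 0" for t
  proof -
    obtain N where N: "N > 0" "inverse (real N) < t" using ex_inverse_of_nat_less[OF t] by auto
    have "S \<inter> {x. t \<le> \<bar>x - p\<bar>} \<subseteq> (\<Union>n<N. P n)"
    proof
      fix x assume x: "x \<in> S \<inter> {x. t \<le> \<bar>x - p\<bar>}"
      then have "x \<noteq> p" using t by auto
      then obtain n where n: "x \<in> P n" using x by (auto simp: S_def)
      have "n < N"
      proof (rule ccontr)
        assume "\<not> n < N"
        hence "1 / (real n + 1) \<le> inverse (real N)" using N by (simp add: field_simps)
        hence "rad n < t" using radle[of n] N by linarith
        thus False using inball[OF n] x by auto
      qed
      thus "x \<in> (\<Union>n<N. P n)" using n by auto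
    qed
    thus ?thesis by (rule finite_subset) (auto intro: fin)
  qed
  have notlim: "\<not> q islimpt S" if "q \<noteq> p" for q
  proof
    assume "q islimpt S"
    define e where "e = \<bar>q - p\<bar> / 2"
    have e: "e > 0" using that by (simp add: e_def)
    have "infinite (S \<inter> ball q e)" using \<open>q islimpt S\<close> e by (simp add: islimpt_eq_infinite_ball)
    moreover have "S \<inter> ball q e \<subseteq> S \<inter> {x. e \<le> \<bar>x - p\<bar>}"
    proof
      fix x assume x: "x \<in> S \<inter> ball q e"
      have "\<bar>q - p\<bar> \<le> \<bar>q - x\<bar> + \<bar>x - p\<bar>" using abs_triangle_ineq[of "q - x" "x - p"] by simp
      moreover have "\<bar>q - x\<bar> < e" using x by (simp add: dist_real_def)
      ultimately show "x \<in> S \<inter> {x. e \<le> \<bar>x - p\<bar>}" using x by (simp add: e_def)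
    qed
    ultimately show False using finout[OF e] finite_subset by blast
  qed
  have closedS: "closed S"
    unfolding closed_limpt using notlim by (auto simp: S_def)
  have contS: "continuous_on S F"
    unfolding continuous_on_eq_continuous_within
  proof
    fix x assume "x \<in> S"
    show "continuous (at x within S) F"
    proof (cases "x = p")
      case False
      hence "at x within S = bot" using notlim[OF False] trivial_limit_within by blast
      thus ?thesis by (simp add: continuous_within)
    next
      case True
      show ?thesis unfolding continuous_within_eps_delta True
      proof (intro allI impI)
        fix e :: real assume e: "e > 0"
        obtain N where N: "N > 0" "inverse (real N) < e" using ex_inverse_of_nat_less[OF e] by auto
        show "\<exists>d>0. \<forall>x'\<in>S. dist x' p < d \<longrightarrow> dist (F x') (F p) < e"
        proof (intro exI[of _ "rad N"] conjI ballI impI)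
          show "rad N > 0" by (rule radpos)
        next
          fix x' assume x': "x' \<in> S" "dist x' p < rad N"
          show "dist (F x') (F p) < e"
          proof (cases "x' = p")
            case True thus ?thesis using e by simp
          next
            case False
            then obtain n where n: "x' \<in> P n" using x' by (auto simp: S_def)
            have "N \<le> n"
            proof (rule ccontr)
              assume "\<not> N \<le> n"
              hence "rad N \<le> rad (Suc n)" by (intro anti) simp
              thus False using sep[OF n] x' by (simp add: dist_real_def)
            qed
            hence "1 / (real n + 1) \<le> inverse (real N)" using N by (simp add: field_simps)
            thus ?thesis using Yb[OF n] FY[OF n] Fp N by (simp add: dist_real_def)
          qed
        qed
      qed
    qed
  qed
  have "closedin (top_of_set UNIV) S" using closedS by (simp add: closedin_closed)
  from Tietze_unbounded[OF contS this] obtain g where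
    g: "continuous_on UNIV g" "\<And>x. x \<in> S \<Longrightarrow> g x = F x" by blast
  show ?thesis
  proof (intro exI[of _ g] conjI allI ballI)
    fix n x assume "x \<in> P n"
    hence "x \<in> S" by (auto simp: S_def)
    thus "g x = Y n x" using g(2) FY[OF \<open>x \<in> P n\<close>] by simp
  qed (rule g(1))
qed

lemma Limsup_ge_freq:
  fixes f :: "'a \<Rightarrow> 'b::complete_linorder"
  assumes "\<And>P. eventually P F \<Longrightarrow> \<exists>x. P x \<and> c \<le> f x"
  shows "c \<le> Limsup F f"
  unfolding Limsup_def
proof (rule INF_greatest)
  fix P assume "P \<in> {P. eventually P F}"
  then obtain x where "P x" "c \<le> f x" using assms by auto
  thus "c \<le> Sup (f ` Collect P)" by (meson SUP_upper2 mem_Collect_eq)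
qed

lemma floor_sep:
  fixes x x' \<delta> :: real
  assumes "\<delta> > 0" "\<lfloor>x / \<delta>\<rfloor> = \<lfloor>x' / \<delta>\<rfloor>"
  shows "\<bar>x - x'\<bar> < \<delta>"
proof -
  have "x \<in> cube1 \<delta> \<lfloor>x / \<delta>\<rfloor>" "x' \<in> cube1 \<delta> \<lfloor>x / \<delta>\<rfloor>"
    using assms by (simp_all add: mem_cube1)
  thus ?thesis by (auto simp: cube1_def algebra_simps)
qed

lemma count_lower:
  fixes X P :: "real set" and g y :: "real \<Rightarrow> real"
  assumes X: "X \<subseteq> {0..1}" and g: "continuous_on UNIV g" and P: "P \<subseteq> X" "finite P"
    and gy: "\<forall>x\<in>P. g x = y x" and d: "\<delta> > 0"
    and sep: "\<forall>x\<in>P. \<forall>x'\<in>P. x \<noteq> x' \<longrightarrow> \<delta> \<le> \<bar>x - x'\<bar> \<or> \<delta> \<le> \<bar>y x - y x'\<bar>"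
  shows "card P \<le> grid_count \<delta> (graph_on X g)"
proof -
  let ?idx = "\<lambda>(x::real,y::real). (\<lfloor>x / \<delta>\<rfloor>, \<lfloor>y / \<delta>\<rfloor>)"
  have "compact (g ` {0..1})" by (rule compact_continuous_image[OF continuous_on_subset[OF g]]) auto
  then obtain B where B: "\<forall>x\<in>{0..1}. \<bar>g x\<bar> \<le> B"
    using compact_imp_bounded[of "g ` {0..1}"] by (auto simp: bounded_real)
  have sub: "?idx ` graph_on X g \<subseteq> {\<lfloor>0/\<delta>\<rfloor>..\<lfloor>1/\<delta>\<rfloor>} \<times> {\<lfloor>-B/\<delta>\<rfloor>..\<lfloor>B/\<delta>\<rfloor>}"
  proof
    fix z assume "z \<in> ?idx ` graph_on X g"
    then obtain x where x: "x \<in> X" "z = (\<lfloor>x / \<delta>\<rfloor>, \<lfloor>g x / \<delta>\<rfloor>)" by (auto simp: graph_on_def)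
    have x01: "0 \<le> x" "x \<le> 1" using x X by auto
    have "\<bar>g x\<bar> \<le> B" using B x01 by auto
    hence "-B \<le> g x" "g x \<le> B" by linarith+
    thus "z \<in> {\<lfloor>0/\<delta>\<rfloor>..\<lfloor>1/\<delta>\<rfloor>} \<times> {\<lfloor>-B/\<delta>\<rfloor>..\<lfloor>B/\<delta>\<rfloor>}"
      using x x01 d by (auto intro!: floor_mono simp: field_simps)
  qed
  have fin: "finite (?idx ` graph_on X g)" by (rule finite_subset[OF sub]) auto
  have inj: "inj_on (\<lambda>x. ?idx (x, g x)) P"
  proof (rule inj_onI)
    fix x x' assume xx: "x \<in> P" "x' \<in> P" "?idx (x, g x) = ?idx (x', g x')"
    show "x = x'"
    proof (rule ccontr)
      assume ne: "x \<noteq> x'"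
      have e: "\<lfloor>x / \<delta>\<rfloor> = \<lfloor>x' / \<delta>\<rfloor>" "\<lfloor>y x / \<delta>\<rfloor> = \<lfloor>y x' / \<delta>\<rfloor>" using xx gy by auto
      show False using sep xx ne floor_sep[OF d e(1)] floor_sep[OF d e(2)] by force
    qed
  qed
  have "card P = card ((\<lambda>x. ?idx (x, g x)) ` P)" using card_image[OF inj] by simp
  also have "\<dots> \<le> card (?idx ` graph_on X g)"
  proof (rule card_mono[OF fin], rule image_subsetI)
    fix x assume "x \<in> P"
    hence "(x, g x) \<in> graph_on X g" using P by (auto simp: graph_on_def)
    thus "?idx (x, g x) \<in> ?idx ` graph_on X g" by (rule imageI)
  qed
  also have "\<dots> = grid_count \<delta> (graph_on X g)" by (simp add: grid_count_prod[OF d])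
  finally show ?thesis .
qed

lemma uc_subset:
  fixes f :: "'a::metric_space \<Rightarrow> 'b::metric_space"
  shows "uniformly_continuous_on T f \<Longrightarrow> S \<subseteq> T \<Longrightarrow> uniformly_continuous_on S f"
  unfolding uniformly_continuous_on_def by (meson subsetD)

lemma assembly:
  fixes X :: "real set" and p c :: real
  assumes X: "X \<subseteq> {0..1}"
    and step: "\<And>r h t. r > 0 \<Longrightarrow> h > 0 \<Longrightarrow> t > 0 \<Longrightarrow> \<exists>P y \<epsilon>. finite P \<and> P \<subseteq> X \<inter> ball p r - {p}
       \<and> (\<forall>x\<in>P. \<bar>y x\<bar> \<le> h) \<and> 0 < \<epsilon> \<and> \<epsilon> < t
       \<and> (\<forall>x\<in>P. \<forall>x'\<in>P. x \<noteq> x' \<longrightarrow> \<epsilon> \<le> \<bar>x - x'\<bar> \<or> \<epsilon> \<le> \<bar>y x - y x'\<bar>)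
       \<and> c \<le> ln (real (card P)) / (- ln \<epsilon>)"
  shows "\<exists>f::real\<Rightarrow>real. uniformly_continuous_on X f \<and> ereal c \<le> upper_box_dim (graph_on X f)"
proof -
  define Q where "Q = (\<lambda>(r::real) (h::real) (t::real) (P::real set) (y::real\<Rightarrow>real) (\<epsilon>::real).
       finite P \<and> P \<subseteq> X \<inter> ball p r - {p}
       \<and> (\<forall>x\<in>P. \<bar>y x\<bar> \<le> h) \<and> 0 < \<epsilon> \<and> \<epsilon> < t
       \<and> (\<forall>x\<in>P. \<forall>x'\<in>P. x \<noteq> x' \<longrightarrow> \<epsilon> \<le> \<bar>x - x'\<bar> \<or> \<epsilon> \<le> \<bar>y x - y x'\<bar>)
       \<and> c \<le> ln (real (card P)) / (- ln \<epsilon>))"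
  let ?h = "\<lambda>n::nat. 1 / (real n + 1)"
  have "\<forall>nr::nat\<times>real. \<exists>T. snd nr > 0 \<longrightarrow> Q (snd nr) (?h (fst nr)) (?h (fst nr)) (fst T) (fst (snd T)) (snd (snd T))"
  proof
    fix nr :: "nat \<times> real"
    show "\<exists>T. snd nr > 0 \<longrightarrow> Q (snd nr) (?h (fst nr)) (?h (fst nr)) (fst T) (fst (snd T)) (snd (snd T))"
    proof (cases "snd nr > 0")
      case True
      have "?h (fst nr) > 0" by simp
      from step[OF True this this] obtain P y \<epsilon> where "Q (snd nr) (?h (fst nr)) (?h (fst nr)) P y \<epsilon>"
        unfolding Q_def by blast
      thus ?thesis by (intro exI[of _ "(P, y, \<epsilon>)"]) simp
    qed simp
  qed
  then obtain G where G: "\<And>nr. snd nr > 0 \<Longrightarrow> Q (snd nr) (?h (fst nr)) (?h (fst nr)) (fst (G nr)) (fst (snd (G nr))) (snd (snd (G nr)))"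
    by (metis choice)
  define PP where "PP n r = fst (G (n, r))" for n r
  define YY where "YY n r = fst (snd (G (n, r)))" for n r
  define EE where "EE n r = snd (snd (G (n, r)))" for n r
  have QG: "Q r (?h n) (?h n) (PP n r) (YY n r) (EE n r)" if "r > 0" for n r
    using G[of "(n, r)"] that by (simp add: PP_def YY_def EE_def)
  define dmin where "dmin A = (if A = {} then 1 else Min ((\<lambda>x. \<bar>x - p\<bar>) ` A))" for A
  have dmin_pos: "dmin A > 0" if "finite A" "p \<notin> A" for A
    using that by (auto simp: dmin_def)
  have dmin_le: "dmin A \<le> \<bar>x - p\<bar>" if "finite A" "x \<in> A" for A x
    using that by (auto simp: dmin_def)
  define rad where "rad = rec_nat (1::real) (\<lambda>n r. min (min r (1 / (real n + 2))) (dmin (PP n r)))"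
  have rad0: "rad 0 = 1" by (simp add: rad_def)
  have radS: "rad (Suc n) = min (min (rad n) (1 / (real n + 2))) (dmin (PP n (rad n)))" for n
    by (simp add: rad_def)
  have radpos: "rad n > 0" for n
  proof (induction n)
    case 0 thus ?case by (simp add: rad0)
  next
    case (Suc n)
    have q: "Q (rad n) (?h n) (?h n) (PP n (rad n)) (YY n (rad n)) (EE n (rad n))" by (rule QG[OF Suc])
    have "finite (PP n (rad n))" "p \<notin> PP n (rad n)" using q unfolding Q_def by blast+
    thus ?case using Suc dmin_pos by (simp add: radS)
  qed
  define P where "P n = PP n (rad n)" for n
  define Y where "Y n = YY n (rad n)" for n
  define E where "E n = EE n (rad n)" for n
  have QP: "Q (rad n) (?h n) (?h n) (P n) (Y n) (E n)" for n
    using QG[OF radpos[of n]] by (simp add: P_def Y_def E_def)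
  have finP: "finite (P n)" for n using QP[of n] by (simp add: Q_def)
  have PX: "P n \<subseteq> X" for n using QP[of n] by (auto simp: Q_def)
  have radle: "rad n \<le> 1 / (real n + 1)" for n
  proof (cases n)
    case 0 thus ?thesis by (simp add: rad0)
  next
    case (Suc m) thus ?thesis by (simp add: radS add.commute)
  qed
  have anti: "rad n \<le> rad m" if "m \<le> n" for m n
    by (rule lift_Suc_antimono_le[of rad, OF _ that]) (simp add: radS)
  obtain g where g: "continuous_on UNIV g" "\<And>n x. x \<in> P n \<Longrightarrow> g x = Y n x"
  proof -
    have "\<exists>g. continuous_on UNIV g \<and> (\<forall>n. \<forall>x\<in>P n. g x = Y n x)"
    proof (rule seq_extension[where rad = rad and p = p])
      show "finite (P n)" for n by (rule finP)
      show "P n \<subseteq> ball p (rad n) - {p}" for n using QP[of n] by (auto simp: Q_def)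
      show "rad n \<le> 1 / (real n + 1)" for n by (rule radle)
      show "rad n \<le> rad m" if "m \<le> n" for m n using anti[OF that] .
      show "rad n > 0" for n by (rule radpos)
      show "rad (Suc n) \<le> \<bar>x - p\<bar>" if "x \<in> P n" for n x
        using dmin_le[OF finP that] by (simp add: radS P_def)
      show "\<bar>Y n x\<bar> \<le> 1 / (real n + 1)" if "x \<in> P n" for n x
        using QP[of n] that by (auto simp: Q_def)
    qed
    thus ?thesis using that by blast
  qed
  have uc: "uniformly_continuous_on X g"
  proof -
    have "uniformly_continuous_on {0..1} g"
      by (rule compact_uniformly_continuous[OF continuous_on_subset[OF g(1)]]) auto
    thus ?thesis using uc_subset X by blast
  qed
  have "ereal c \<le> upper_box_dim (graph_on X g)"
    unfolding upper_box_dim_def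
  proof (rule Limsup_ge_freq)
    fix R assume "eventually R (at_right (0::real))"
    then obtain b where b: "b > 0" "\<And>y. y > 0 \<Longrightarrow> y < b \<Longrightarrow> R y"
      by (auto simp: eventually_at_right_field)
    obtain n where n: "n > 0" "inverse (real n) < b" using ex_inverse_of_nat_less[OF b(1)] by auto
    have q: "0 < E n" "E n < ?h n" "c \<le> ln (real (card (P n))) / (- ln (E n))"
      and sep: "\<forall>x\<in>P n. \<forall>x'\<in>P n. x \<noteq> x' \<longrightarrow> E n \<le> \<bar>x - x'\<bar> \<or> E n \<le> \<bar>Y n x - Y n x'\<bar>"
      using QP[of n] by (auto simp: Q_def)
    have "?h n \<le> inverse (real n)" using n by (simp add: field_simps)
    hence Eb: "E n < b" using q n by linarith
    have E1: "E n < 1" using q(2) by (smt (verit) divide_le_eq_1 of_nat_0_le_iff)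
    have L: "- ln (E n) > 0" using q(1) E1 by simp
    have cnt: "card (P n) \<le> grid_count (E n) (graph_on X g)"
      by (rule count_lower[OF X g(1) PX finP _ q(1) sep]) (simp add: g(2))
    have "ln (real (card (P n))) \<le> ln (real (grid_count (E n) (graph_on X g)))"
    proof (cases "card (P n) = 0")
      case True
      have "0 \<le> ln (real (grid_count (E n) (graph_on X g)))"
        by (cases "grid_count (E n) (graph_on X g) = 0") auto
      thus ?thesis using True by simp
    next
      case False thus ?thesis using cnt by simp
    qed
    hence "ln (real (card (P n))) / (- ln (E n)) \<le> ln (real (grid_count (E n) (graph_on X g))) / (- ln (E n))"
      using L by (intro divide_right_mono) auto
    hence "ereal c \<le> ereal (ln (real (grid_count (E n) (graph_on X g))) / (- ln (E n)))"
      using q(3) by simp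
    thus "\<exists>x. R x \<and> ereal c \<le> ereal (ln (real (grid_count x (graph_on X g))) / - ln x)"
      using b(2)[OF q(1) Eb] by blast
  qed
  thus ?thesis using uc by blast
qed

lemma step1:
  fixes X :: "real set" and p c r h t :: real
  assumes inf: "\<And>r. r > 0 \<Longrightarrow> infinite (X \<inter> ball p r)"
    and c: "0 < c" "c < 1" and rht: "r > 0" "h > 0" "t > 0"
  shows "\<exists>P y \<epsilon>. finite P \<and> P \<subseteq> X \<inter> ball p r - {p}
       \<and> (\<forall>x\<in>P. \<bar>y x\<bar> \<le> h) \<and> 0 < \<epsilon> \<and> \<epsilon> < t
       \<and> (\<forall>x\<in>P. \<forall>x'\<in>P. x \<noteq> x' \<longrightarrow> \<epsilon> \<le> \<bar>x - x'\<bar> \<or> \<epsilon> \<le> \<bar>y x - y x'\<bar>)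
       \<and> c \<le> ln (real (card P)) / (- ln \<epsilon>)"
proof -
  define \<epsilon> where "\<epsilon> = min (t/2) (min (1/2) (h powr (1 / (1 - c))))"
  have e: "0 < \<epsilon>" "\<epsilon> < t" "\<epsilon> < 1" "\<epsilon> \<le> h powr (1 / (1 - c))"
    using rht c by (auto simp: \<epsilon>_def)
  have "\<epsilon> powr (1 - c) \<le> (h powr (1 / (1 - c))) powr (1 - c)"
    using e c by (intro powr_mono2) auto
  also have "\<dots> = h" using c rht by (simp add: powr_powr)
  finally have amp: "\<epsilon> powr (1 - c) \<le> h" .
  define m where "m = nat \<lceil>\<epsilon> powr (- c)\<rceil>"
  have m1: "real m \<ge> \<epsilon> powr (- c)" unfolding m_def by linarith
  have m2: "real m < \<epsilon> powr (- c) + 1"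
    unfolding m_def using e by (simp add: of_nat_nat) linarith
  have "infinite (X \<inter> ball p r - {p})" using inf[OF rht(1)] by simp
  then obtain P where P: "finite P" "card P = m" "P \<subseteq> X \<inter> ball p r - {p}"
    using infinite_arbitrarily_large by blast
  obtain f where f: "bij_betw f {0..<m} P" using ex_bij_betw_nat_finite[OF P(1)] P(2) by auto
  define idx where "idx = inv_into {0..<m} f"
  have idx: "bij_betw idx P {0..<m}" unfolding idx_def by (rule bij_betw_inv_into[OF f])
  define y where "y x = \<epsilon> * real (idx x)" for x
  show ?thesis
  proof (intro exI[of _ P] exI[of _ y] exI[of _ \<epsilon>] conjI)
    show "finite P" "P \<subseteq> X \<inter> ball p r - {p}" by (fact P(1), fact P(3))
    show "0 < \<epsilon>" "\<epsilon> < t" by (fact e(1), fact e(2))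
    show "\<forall>x\<in>P. \<bar>y x\<bar> \<le> h"
    proof
      fix x assume "x \<in> P"
      hence "idx x < m" using idx by (auto simp: bij_betw_def)
      hence "real (idx x) + 1 \<le> real m" by linarith
      hence "real (idx x) < \<epsilon> powr (- c)" using m2 by linarith
      hence "\<epsilon> * real (idx x) \<le> \<epsilon> * \<epsilon> powr (- c)" using e by simp
      also have "\<epsilon> * \<epsilon> powr (- c) = \<epsilon> powr (1 - c)" using e by (simp add: powr_diff powr_minus field_simps)
      finally show "\<bar>y x\<bar> \<le> h" using amp e by (simp add: y_def)
    qed
    show "\<forall>x\<in>P. \<forall>x'\<in>P. x \<noteq> x' \<longrightarrow> \<epsilon> \<le> \<bar>x - x'\<bar> \<or> \<epsilon> \<le> \<bar>y x - y x'\<bar>"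
    proof (intro ballI impI disjI2)
      fix x x' assume xx: "x \<in> P" "x' \<in> P" "x \<noteq> x'"
      hence "idx x \<noteq> idx x'" using idx by (auto simp: bij_betw_def inj_on_def)
      hence "1 \<le> \<bar>real (idx x) - real (idx x')\<bar>" by linarith
      hence "\<epsilon> * 1 \<le> \<epsilon> * \<bar>real (idx x) - real (idx x')\<bar>" using e by (intro mult_left_mono) auto
      thus "\<epsilon> \<le> \<bar>y x - y x'\<bar>" using e by (simp add: y_def abs_mult right_diff_distrib[symmetric])
    qed
    have L: "- ln \<epsilon> > 0" using e by simp
    have "ln (\<epsilon> powr (- c)) \<le> ln (real m)"
    proof -
      have "0 < \<epsilon> powr (- c)" using e by simp
      hence "0 < real m" using m1 by linarith
      thus ?thesis using m1 e by (subst ln_le_cancel_iff) auto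
    qed
    hence "c * (- ln \<epsilon>) \<le> ln (real (card P))" using P(2) by simp
    thus "c \<le> ln (real (card P)) / (- ln \<epsilon>)" using L by (simp add: field_simps)
  qed
qed

lemma Limsup_gt_freq:
  fixes f :: "'a \<Rightarrow> 'b::complete_linorder"
  assumes "b < Limsup F f" "eventually P F"
  shows "\<exists>x. P x \<and> b < f x"
proof -
  have "b < Sup (f ` Collect P)"
    using less_INF_D[OF assms(1)[unfolded Limsup_def], of P] assms(2) by simp
  thus ?thesis by (auto simp: less_SUP_iff)
qed

lemma step2:
  fixes X :: "real set" and p b c r h t :: real
  assumes X: "X \<subseteq> {0..1}"
    and dimA: "\<And>r. r > 0 \<Longrightarrow> ereal b < upper_box_dim (X \<inter> ball p r - {p})"
    and c: "0 < c" "c < 2 * b" and rht: "r > 0" "h > 0" "t > 0"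
  shows "\<exists>P y \<epsilon>. finite P \<and> P \<subseteq> X \<inter> ball p r - {p}
       \<and> (\<forall>x\<in>P. \<bar>y x\<bar> \<le> h) \<and> 0 < \<epsilon> \<and> \<epsilon> < t
       \<and> (\<forall>x\<in>P. \<forall>x'\<in>P. x \<noteq> x' \<longrightarrow> \<epsilon> \<le> \<bar>x - x'\<bar> \<or> \<epsilon> \<le> \<bar>y x - y x'\<bar>)
       \<and> c \<le> ln (real (card P)) / (- ln \<epsilon>)"
proof -
  define A where "A = X \<inter> ball p r - {p}"
  have AX: "A \<subseteq> {0..1}" using X by (auto simp: A_def)
  define \<gamma> where "\<gamma> = (b / c + 1/2) / 2"
  have bpos: "b > 0" using c by linarith
  have bc: "b / c > 1/2" using c by (simp add: field_simps)
  have g1: "\<gamma> > 1/2" unfolding \<gamma>_def using bc c by (simp add: field_simps)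
  have "c * (b / c) = b" using c by simp
  have g2: "c * \<gamma> < b"
  proof -
    have "\<gamma> < b / c" using bc by (simp add: \<gamma>_def)
    thus ?thesis using c by (simp add: field_simps)
  qed
  define \<beta> where "\<beta> = b - c * \<gamma>"
  have beta: "\<beta> > 0" using g2 by (simp add: \<beta>_def)
  define s where "s = min (1/2) (min (t powr (1/\<gamma>)) (min (h powr (1/(2*\<gamma>-1))) (exp (- ln 2 / \<beta>))))"
  have s: "s > 0" using rht by (simp add: s_def)
  have ev: "eventually (\<lambda>\<eta>. \<eta> \<in> {0<..<s}) (at_right (0::real))" by (rule eventually_at_right_real[OF s])
  have dA: "ereal b < Limsup (at_right 0) (\<lambda>\<delta>. ereal (ln (real (grid_count \<delta> A)) / (- ln \<delta>)))"
    using dimA[OF rht(1)] by (simp add: upper_box_dim_def A_def)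
  from Limsup_gt_freq[OF dA ev]
  obtain \<eta> where eta: "\<eta> \<in> {0<..<s}"
    and rat: "ereal b < ereal (ln (real (grid_count \<eta> A)) / (- ln \<eta>))" by auto
  have eta0: "0 < \<eta>" and eta1: "\<eta> < 1/2" using eta by (auto simp: s_def)
  define L where "L = - ln \<eta>"
  have "ln \<eta> < ln (1/2)" using eta0 eta1 by (subst ln_less_cancel_iff) auto
  hence L2: "L > ln 2" by (simp add: L_def ln_div)
  have Lpos: "L > 0" using L2 ln_gt_zero[of 2] by linarith
  define N where "N = grid_count \<eta> A"
  have bL: "b * L < ln (real N)" using rat Lpos by (simp add: N_def L_def field_simps)
  have Npos: "N > 0"
  proof (rule ccontr)
    assume "\<not> N > 0" thus False using bL mult_pos_pos[OF bpos Lpos] by simp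
  qed
  define \<epsilon> where "\<epsilon> = \<eta> powr \<gamma>"
  have eps0: "\<epsilon> > 0" using eta0 by (simp add: \<epsilon>_def)
  have epst: "\<epsilon> < t"
  proof -
    have "\<eta> < t powr (1/\<gamma>)" using eta by (simp add: s_def)
    hence "\<eta> powr \<gamma> < (t powr (1/\<gamma>)) powr \<gamma>" using g1 eta0 by (intro powr_less_mono2) auto
    also have "\<dots> = t" using g1 rht by (simp add: powr_powr)
    finally show ?thesis by (simp add: \<epsilon>_def)
  qed
  have amp0: "\<eta> powr (2*\<gamma>-1) \<le> h"
  proof -
    have "\<eta> < h powr (1/(2*\<gamma>-1))" using eta by (simp add: s_def)
    hence "\<eta> powr (2*\<gamma>-1) < (h powr (1/(2*\<gamma>-1))) powr (2*\<gamma>-1)" using g1 eta0 by (intro powr_less_mono2) auto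
    also have "\<dots> = h" using g1 rht by (simp add: powr_powr)
    finally show ?thesis by simp
  qed
  have betaL: "\<beta> * L > ln 2"
  proof -
    have "\<eta> < exp (- ln 2 / \<beta>)" using eta by (simp add: s_def)
    hence "ln \<eta> < - ln 2 / \<beta>" using ln_less_cancel_iff[of \<eta> "exp (- ln 2 / \<beta>)"] eta0 by simp
    hence "ln 2 / \<beta> < L" by (simp add: L_def)
    thus ?thesis using beta by (simp add: field_simps)
  qed
  let ?fl = "\<lambda>x. \<lfloor>x / \<eta>\<rfloor>"
  define K where "K = ?fl ` A"
  have finK: "finite K" unfolding K_def by (rule finite_floor_image[OF AX eta0])
  have cardK: "card K = N" unfolding K_def N_def by (simp add: grid_count_real[OF eta0])
  obtain KS where KS: "KS \<subseteq> K" "\<And>k k'. k \<in> KS \<Longrightarrow> k' \<in> KS \<Longrightarrow> even k = even k'" "card K \<le> 2 * card KS"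
  proof -
    define K0 where "K0 = {k\<in>K. even k}"
    define K1 where "K1 = {k\<in>K. odd k}"
    have "card K = card K0 + card K1"
    proof -
      have "K = K0 \<union> K1" "K0 \<inter> K1 = {}" by (auto simp: K0_def K1_def)
      moreover have "finite K0" "finite K1" using finK by (auto simp: K0_def K1_def)
      ultimately show ?thesis by (simp add: card_Un_disjoint)
    qed
    moreover have "K0 \<subseteq> K" "K1 \<subseteq> K" by (auto simp: K0_def K1_def)
    ultimately show ?thesis
    proof (cases "card K1 \<le> card K0")
      case True
      show ?thesis
      proof (rule that[of K0])
        show "K0 \<subseteq> K" by fact
        show "even k = even k'" if "k \<in> K0" "k' \<in> K0" for k k' using that by (simp add: K0_def)
        show "card K \<le> 2 * card K0" using True \<open>card K = card K0 + card K1\<close> by linarith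
      qed
    next
      case False
      show ?thesis
      proof (rule that[of K1])
        show "K1 \<subseteq> K" by fact
        show "even k = even k'" if "k \<in> K1" "k' \<in> K1" for k k' using that by (simp add: K1_def)
        show "card K \<le> 2 * card K1" using False \<open>card K = card K0 + card K1\<close> by linarith
      qed
    qed
  qed
  define pick where "pick k = (SOME x. x \<in> A \<and> ?fl x = k)" for k
  have pick: "pick k \<in> A" "?fl (pick k) = k" if kK: "k \<in> K" for k
  proof -
    obtain x where "x \<in> A" "?fl x = k" using kK by (auto simp: K_def)
    hence "\<exists>x. x \<in> A \<and> ?fl x = k" by blast
    from someI_ex[OF this] show "pick k \<in> A" "?fl (pick k) = k" by (simp_all add: pick_def)
  qed
  define P where "P = pick ` KS"
  have injP: "inj_on pick KS"
  proof (rule inj_onI)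
    fix k k' assume kk: "k \<in> KS" "k' \<in> KS" "pick k = pick k'"
    hence "k \<in> K" "k' \<in> K" using KS(1) by auto
    have "k = ?fl (pick k)" using pick(2)[OF \<open>k \<in> K\<close>] by simp
    also have "\<dots> = ?fl (pick k')" by (simp only: kk(3))
    also have "\<dots> = k'" using pick(2)[OF \<open>k' \<in> K\<close>] .
    finally show "k = k'" .
  qed
  have cardP: "card P = card KS" unfolding P_def by (rule card_image[OF injP])
  have finP: "finite P" unfolding P_def using finite_subset[OF KS(1) finK] by simp
  have PA: "P \<subseteq> A" unfolding P_def using pick KS(1) by auto
  define M where "M = nat \<lceil>\<eta> powr (\<gamma> - 1)\<rceil>"
  have epos: "\<eta> powr (\<gamma> - 1) > 0" using eta0 by simp
  have M2: "real M \<ge> \<eta> powr (\<gamma> - 1)" unfolding M_def by linarith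
  have "real M > 0" using M2 epos by linarith
  hence M1: "M \<ge> 1" by simp
  have M3: "real M - 1 < \<eta> powr (\<gamma> - 1)" unfolding M_def using epos by (simp add: of_nat_nat) linarith
  have Meta: "real M * \<eta> \<ge> \<epsilon>"
  proof -
    have "\<eta> powr (\<gamma> - 1) * \<eta> = \<eta> powr (\<gamma> - 1) * \<eta> powr 1" using eta0 by simp
    also have "\<dots> = \<eta> powr ((\<gamma> - 1) + 1)" by (rule powr_add[symmetric])
    also have "\<dots> = \<epsilon>" by (simp add: \<epsilon>_def)
    finally have "\<epsilon> = \<eta> powr (\<gamma> - 1) * \<eta>" by simp
    thus ?thesis using M2 eta0 by (simp add: mult_right_mono)
  qed
  define y where "y x = \<epsilon> * real_of_int ((?fl x div 2) mod int M)" for x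
  show ?thesis
  proof (intro exI[of _ P] exI[of _ y] exI[of _ \<epsilon>] conjI)
    show "finite P" by (fact finP)
    show "P \<subseteq> X \<inter> ball p r - {p}" using PA by (simp add: A_def)
    show "0 < \<epsilon>" "\<epsilon> < t" by (fact eps0, fact epst)
    show "\<forall>x\<in>P. \<bar>y x\<bar> \<le> h"
    proof
      fix x assume "x \<in> P"
      define j where "j = (?fl x div 2) mod int M"
      have j: "0 \<le> j" "j \<le> int M - 1" using M1 by (auto simp: j_def)
      hence "real_of_int j \<le> real M - 1" by linarith
      hence "real_of_int j \<le> \<eta> powr (\<gamma> - 1)" using M3 by linarith
      hence "\<epsilon> * real_of_int j \<le> \<epsilon> * \<eta> powr (\<gamma> - 1)" using eps0 by simp
      also have "\<dots> = \<eta> powr (\<gamma> + (\<gamma> - 1))" unfolding \<epsilon>_def by (rule powr_add[symmetric])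
      also have "\<gamma> + (\<gamma> - 1) = 2*\<gamma>-1" by simp
      finally show "\<bar>y x\<bar> \<le> h" using amp0 j eps0 by (simp add: y_def j_def[symmetric])
    qed
    show "\<forall>x\<in>P. \<forall>x'\<in>P. x \<noteq> x' \<longrightarrow> \<epsilon> \<le> \<bar>x - x'\<bar> \<or> \<epsilon> \<le> \<bar>y x - y x'\<bar>"
    proof (intro ballI impI)
      fix x x' assume x: "x \<in> P" and x': "x' \<in> P" and ne: "x \<noteq> x'"
      obtain k where k: "k \<in> KS" "x = pick k" using x by (auto simp: P_def)
      obtain k' where k': "k' \<in> KS" "x' = pick k'" using x' by (auto simp: P_def)
      have fk: "?fl x = k" "?fl x' = k'" using k k' KS(1) pick by auto
      have kk: "k \<noteq> k'" using k k' ne by auto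
      have par: "even k = even k'" using KS(2)[OF k(1) k'(1)] .
      define j where "j = k div 2"
      define j' where "j' = k' div 2"
      have "k = 2 * j + k mod 2" "k' = 2 * j' + k' mod 2" by (simp_all add: j_def j'_def)
      moreover have "k mod 2 = k' mod 2" using par by (simp add: mod2_eq_if)
      ultimately have jj: "j \<noteq> j'" "k - k' = 2 * (j - j')" using kk by auto
      show "\<epsilon> \<le> \<bar>x - x'\<bar> \<or> \<epsilon> \<le> \<bar>y x - y x'\<bar>"
      proof (cases "j mod int M = j' mod int M")
        case False
        hence "1 \<le> \<bar>real_of_int (j mod int M) - real_of_int (j' mod int M)\<bar>" by linarith
        hence "\<epsilon> * 1 \<le> \<epsilon> * \<bar>real_of_int (j mod int M) - real_of_int (j' mod int M)\<bar>"
          using eps0 by (intro mult_left_mono) auto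
        hence "\<epsilon> \<le> \<bar>y x - y x'\<bar>" using eps0
          by (simp add: y_def fk j_def j'_def abs_mult right_diff_distrib[symmetric])
        thus ?thesis ..
      next
        case True
        hence "int M dvd (j - j')" by (simp add: mod_eq_dvd_iff)
        hence "\<bar>int M\<bar> \<le> \<bar>j - j'\<bar>" using jj(1) by (intro dvd_imp_le_int) auto
        hence kd: "2 * int M \<le> \<bar>k - k'\<bar>" using jj(2) by (simp add: abs_mult)
        have cx: "of_int k \<le> x / \<eta>" "x / \<eta> < of_int k + 1" using fk(1) by linarith+
        have cx': "of_int k' \<le> x' / \<eta>" "x' / \<eta> < of_int k' + 1" using fk(2) by linarith+
        have M1r: "real M \<ge> 1" using M1 by simp
        have "real M \<le> \<bar>x / \<eta> - x' / \<eta>\<bar>"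
        proof (cases "k \<le> k'")
          case True
          hence "2 * int M \<le> k' - k" using kd by simp
          hence "real_of_int (2 * int M) \<le> real_of_int (k' - k)" by (simp only: of_int_le_iff)
          hence "2 * real M \<le> of_int k' - of_int k" by simp
          hence "real M \<le> x' / \<eta> - x / \<eta>" using cx cx' M1r by linarith
          thus ?thesis using abs_ge_minus_self[of "x / \<eta> - x' / \<eta>"] by linarith
        next
          case False
          hence "2 * int M \<le> k - k'" using kd by simp
          hence "real_of_int (2 * int M) \<le> real_of_int (k - k')" by (simp only: of_int_le_iff)
          hence "2 * real M \<le> of_int k - of_int k'" by simp
          hence "real M \<le> x / \<eta> - x' / \<eta>" using cx cx' M1r by linarith
          thus ?thesis using abs_ge_self[of "x / \<eta> - x' / \<eta>"] by linarith
        qed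
        hence "real M * \<eta> \<le> \<bar>x / \<eta> - x' / \<eta>\<bar> * \<eta>" using eta0 by (simp add: mult_right_mono)
        also have "\<bar>x / \<eta> - x' / \<eta>\<bar> * \<eta> = \<bar>x - x'\<bar>" using eta0
          by (simp add: diff_divide_distrib[symmetric] abs_divide)
        finally have "\<epsilon> \<le> \<bar>x - x'\<bar>" using Meta by linarith
        thus ?thesis ..
      qed
    qed
    show "c \<le> ln (real (card P)) / (- ln \<epsilon>)"
    proof -
      have le: "real N \<le> 2 * real (card P)" using KS(3) cardK cardP by linarith
      have cP: "card P > 0" using le Npos by linarith
      have "ln (real N) \<le> ln (2 * real (card P))" using le Npos by (subst ln_le_cancel_iff) auto
      also have "\<dots> = ln 2 + ln (real (card P))" using cP by (simp add: ln_mult)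
      finally have "b * L - ln 2 < ln (real (card P))" using bL by linarith
      moreover have "c * \<gamma> * L \<le> b * L - ln 2" using betaL by (simp add: \<beta>_def algebra_simps)
      ultimately have lt: "c * (\<gamma> * L) \<le> ln (real (card P))" by (simp add: mult.assoc)
      have el: "- ln \<epsilon> = \<gamma> * L" using eta0 by (simp add: \<epsilon>_def L_def)
      have gL: "\<gamma> * L > 0" using g1 Lpos by simp
      show ?thesis using lt gL by (simp add: el field_simps)
    qed
  qed
qed

lemma ratio_lt_imp:
  assumes "ln (real N) / L < b" "L > 0"
  shows "real N < exp (b * L)"
proof (cases "N = 0")
  case True thus ?thesis by simp
next
  case False
  hence "ln (real N) < b * L" using assms by (simp add: pos_divide_less_eq)
  hence "exp (ln (real N)) < exp (b * L)" by simp
  thus ?thesis using False by simp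
qed

lemma ratio_gt_imp:
  assumes "b < ln (real N) / L" "L > 0" "b \<ge> 0"
  shows "exp (b * L) < real N"
proof -
  have lt: "b * L < ln (real N)" using assms by (simp add: pos_less_divide_eq)
  have "N \<noteq> 0"
  proof
    assume "N = 0"
    moreover have "0 \<le> b * L" using assms(2,3) by simp
    ultimately show False using lt by simp
  qed
  have "exp (b * L) < exp (ln (real N))" using lt by (simp only: exp_less_cancel_iff)
  also have "exp (ln (real N)) = real N" using \<open>N \<noteq> 0\<close> by simp
  finally show ?thesis .
qed

lemma local_dim:
  fixes X :: "real set" and b :: real
  assumes X: "X \<subseteq> {0..1}" and b0: "0 \<le> b" and dim: "ereal b < upper_box_dim X"
  shows "\<exists>p. \<forall>r>0. ereal b < upper_box_dim (X \<inter> ball p r - {p})"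
proof (rule ccontr)
  assume "\<not> ?thesis"
  hence "\<forall>p. \<exists>r. r > 0 \<and> upper_box_dim (X \<inter> ball p r - {p}) \<le> ereal b" by (auto simp: not_less)
  then obtain R where R: "\<And>p. R p > 0" "\<And>p. upper_box_dim (X \<inter> ball p (R p) - {p}) \<le> ereal b"
    by metis
  have cov: "{0..1::real} \<subseteq> (\<Union>p\<in>{0..1}. ball p (R p))" using R(1) by force
  obtain T where T: "T \<subseteq> {0..1}" "finite T" "{0..1::real} \<subseteq> (\<Union>p\<in>T. ball p (R p))"
    using compactE_image[OF compact_Icc open_ball cov] by blast
  define A where "A p = X \<inter> ball p (R p) - {p}" for p
  have AX: "A p \<subseteq> {0..1}" for p using X by (auto simp: A_def)
  have Xsub: "X \<subseteq> (\<Union>p\<in>T. A p) \<union> T"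
    using T(3) X by (auto simp: A_def)
  obtain b2 where b2: "ereal b < ereal b2" "ereal b2 < upper_box_dim X" using ereal_dense2[OF dim] by blast
  define b1 where "b1 = (b + b2) / 2"
  have bb: "b < b1" "b1 < b2" using b2 by (auto simp: b1_def)
  define n where "n = real (card T) + 1"
  have n1: "n \<ge> 1" by (simp add: n_def)
  define s where "s = min (1/2) (exp (- ln (2 * n) / (b2 - b1)))"
  have s: "s > 0" by (simp add: s_def)
  let ?r = "\<lambda>F \<delta>. ereal (ln (real (grid_count \<delta> F)) / (- ln \<delta>))"
  have ev1: "eventually (\<lambda>\<delta>. \<forall>p\<in>T. ?r (A p) \<delta> < ereal b1) (at_right 0)"
  proof (rule eventually_ball_finite[OF T(2)], rule ballI)
    fix p assume "p \<in> T"
    have "Limsup (at_right 0) (?r (A p)) < ereal b1"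
      using order.strict_trans1[OF R(2)[of p], of "ereal b1"] bb by (simp add: upper_box_dim_def A_def)
    thus "eventually (\<lambda>\<delta>. ?r (A p) \<delta> < ereal b1) (at_right 0)" by (rule Limsup_lessD)
  qed
  have ev2: "eventually (\<lambda>\<delta>. \<delta> \<in> {0<..<s}) (at_right 0)" by (rule eventually_at_right_real[OF s])
  have "ereal b2 < Limsup (at_right 0) (?r X)" using b2 by (simp add: upper_box_dim_def)
  from Limsup_gt_freq[OF this eventually_conj[OF ev1 ev2]]
  obtain \<delta> where d: "\<forall>p\<in>T. ?r (A p) \<delta> < ereal b1" "\<delta> \<in> {0<..<s}" "ereal b2 < ?r X \<delta>" by blast
  have d0: "0 < \<delta>" and d1: "\<delta> < 1/2" and d2: "\<delta> < exp (- ln (2 * n) / (b2 - b1))"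
    using d(2) by (auto simp: s_def)
  define L where "L = - ln \<delta>"
  have Lpos: "L > 0" using d0 d1 by (simp add: L_def)
  define E where "E = exp (b1 * L)"
  have E1: "E \<ge> 1" using bb b0 Lpos by (simp add: E_def)
  have NA: "real (grid_count \<delta> (A p)) < E" if "p \<in> T" for p
    using ratio_lt_imp[where N = "grid_count \<delta> (A p)" and L = L and b = b1] d(1) that Lpos by (auto simp: E_def L_def)
  have NX: "exp (b2 * L) < real (grid_count \<delta> X)"
    using ratio_gt_imp[where N = "grid_count \<delta> X" and L = L and b = b2] d(3) Lpos bb b0 by (auto simp: L_def)
  let ?fl = "\<lambda>x. \<lfloor>x / \<delta>\<rfloor>"
  have "grid_count \<delta> X = card (?fl ` X)" by (rule grid_count_real[OF d0])
  also have "\<dots> \<le> card ((\<Union>p\<in>T. ?fl ` A p) \<union> ?fl ` T)"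
  proof (rule card_mono)
    show "finite ((\<Union>p\<in>T. ?fl ` A p) \<union> ?fl ` T)"
      using T(2) finite_floor_image[OF AX d0] by auto
    show "?fl ` X \<subseteq> (\<Union>p\<in>T. ?fl ` A p) \<union> ?fl ` T" using Xsub by blast
  qed
  also have "\<dots> \<le> card (\<Union>p\<in>T. ?fl ` A p) + card (?fl ` T)" by (rule card_Un_le)
  also have "\<dots> \<le> (\<Sum>p\<in>T. card (?fl ` A p)) + card T"
    using card_UN_le[OF T(2)] card_image_le[OF T(2)] by (intro add_mono) auto
  finally have cnt: "real (grid_count \<delta> X) \<le> (\<Sum>p\<in>T. real (grid_count \<delta> (A p))) + real (card T)"
    by (simp add: grid_count_real[OF d0] flip: of_nat_sum of_nat_add)
  have "(\<Sum>p\<in>T. real (grid_count \<delta> (A p))) \<le> (\<Sum>p\<in>T. E)"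
    using NA by (intro sum_mono) (auto intro: less_imp_le)
  hence "real (grid_count \<delta> X) \<le> real (card T) * E + real (card T)" using cnt by simp
  also have "\<dots> \<le> real (card T) * E + real (card T) * E"
    using mult_left_mono[OF E1, of "real (card T)"] by (simp add: mult.commute)
  also have "\<dots> \<le> 2 * n * E" using E1 by (simp add: n_def algebra_simps)
  finally have "exp (b2 * L) < 2 * n * E" using NX by linarith
  also have "2 * n * E = exp (ln (2 * n) + b1 * L)" using n1 by (simp add: E_def exp_add)
  finally have "b2 * L < ln (2 * n) + b1 * L" by simp
  hence lt: "(b2 - b1) * L < ln (2 * n)" by (simp add: algebra_simps)
  have "ln \<delta> < - ln (2 * n) / (b2 - b1)"
    using d2 d0 ln_less_cancel_iff[of \<delta> "exp (- ln (2 * n) / (b2 - b1))"] by simp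
  hence "ln (2 * n) / (b2 - b1) < L" by (simp add: L_def)
  hence "ln (2 * n) < (b2 - b1) * L" using bb by (simp add: pos_divide_less_eq mult.commute)
  thus False using lt by linarith
qed

theorem corollary3:
  fixes X :: "real set" and a :: ereal
  assumes "X \<subseteq> {0..1}" and "infinite X"
    and "upper_box_dim X = a"
  shows "max 1 (2 * a) \<le> upper_graph_box_dim X \<and> upper_graph_box_dim X \<le> a + 1"
proof
  have X: "X \<subseteq> {0..1}" and Xne: "X \<noteq> {}" using assms(1,2) by auto
  show "upper_graph_box_dim X \<le> a + 1"
    unfolding upper_graph_box_dim_def
    by (rule SUP_least) (use upper_bound[OF X Xne] assms(3) in auto)
  have reach: "ereal c \<le> upper_graph_box_dim X"
    if "\<exists>f::real\<Rightarrow>real. uniformly_continuous_on X f \<and> ereal c \<le> upper_box_dim (graph_on X f)" for c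
  proof -
    from that obtain f :: "real \<Rightarrow> real" where f: "uniformly_continuous_on X f" "ereal c \<le> upper_box_dim (graph_on X f)"
      by blast
    show ?thesis unfolding upper_graph_box_dim_def
      by (rule SUP_upper2[of f]) (use f in auto)
  qed
  have key: "ereal c \<le> upper_graph_box_dim X" if c: "ereal c < max 1 (2 * a)" for c
  proof (cases "c < 1")
    case True
    obtain p where "p \<in> {0..1}" "p islimpt X"
      using Heine_Borel_imp_Bolzano_Weierstrass[OF compact_Icc assms(2) X] by blast
    hence inf: "\<And>r. r > 0 \<Longrightarrow> infinite (X \<inter> ball p r)"
      by (simp add: islimpt_eq_infinite_ball inf_commute)
    define c' where "c' = max c (1/2)"
    have c': "0 < c'" "c' < 1" using True by (auto simp: c'_def)
    have "\<exists>f::real\<Rightarrow>real. uniformly_continuous_on X f \<and> ereal c' \<le> upper_box_dim (graph_on X f)"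
      by (rule assembly[OF X, where p = p]) (rule step1[OF inf c'], auto)
    hence "ereal c' \<le> upper_graph_box_dim X" by (rule reach)
    moreover have "ereal c \<le> ereal c'" by (simp add: c'_def)
    ultimately show ?thesis by (rule order.trans[rotated])
  next
    case False
    hence c1: "c \<ge> 1" by simp
    hence c2a: "ereal c < 2 * a" using c by (auto simp: max_def split: if_splits)
    obtain b where b: "c < 2 * b" "ereal b < a" "0 \<le> b"
    proof (cases a)
      case (real a')
      hence "c < 2 * a'" using c2a by simp
      thus ?thesis using that[of "(c/2 + a')/2"] real c1 by simp
    next
      case PInf
      thus ?thesis using that[of c] c1 by simp
    next
      case MInf
      thus ?thesis using c2a by simp
    qed
    obtain p where p: "\<forall>r>0. ereal b < upper_box_dim (X \<inter> ball p r - {p})"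
      using local_dim[OF X b(3)] b(2) assms(3) by blast
    have cpos: "0 < c" using c1 by simp
    have "\<exists>f::real\<Rightarrow>real. uniformly_continuous_on X f \<and> ereal c \<le> upper_box_dim (graph_on X f)"
      by (rule assembly[OF X, where p = p]) (rule step2[OF X _ cpos b(1)], use p in auto)
    thus ?thesis by (rule reach)
  qed
  show "max 1 (2 * a) \<le> upper_graph_box_dim X"
  proof (rule dense_le)
    fix z assume z: "z < max 1 (2 * a)"
    show "z \<le> upper_graph_box_dim X"
    proof (cases z)
      case (real c) thus ?thesis using key z by simp
    next
      case PInf thus ?thesis using z by simp
    next
      case MInf thus ?thesis by simp
    qed
  qed
qed


end
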